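(* Let $\Psi\colon V\to W$ be a morphism of FI-modules and let $E\geq 0$. Assume that $W$ is centrally stable starting at $E$, that $V$ is boundedly generated in degree $E$, and that for all finite sets $J\subset\mathbb{N}$ with $|J|\leq E$ the map $\Psi_J\colon V_J\to W_J$ is an isomorphism. Then $\Psi$ is an isomorphism, i.e. $\Psi_J$ is an isomorphism for every finite $J\subset\mathbb{N}$.
   Context: $\mathrm{FI}$ is the category of finite subsets of $\mathbb{N}$ and injections. An FI-module $W$ is a functor from $\mathrm{FI}$ to abelian groups: abelian groups $W_I$ and homomorphisms $W_f\colon W_I\to W_J$ for injections $f$, functorially. For $I\subset J$ write $W_I^J=W_f$ for the inclusion $f$. A morphism $\Psi\colon V\to W$ is a natural transformation (maps $\Psi_I\colon V_I\to W_I$ commuting with all $V_f,W_f$). $W$ is boundedly generated in degree $A$ if for every finite $J$, the map $\bigoplus_{I\subset J,|I|\leq A}W_I\to W_J$ induced by the $W_I^J$ is surjective. For finite $J$, let $\eta\colon\bigoplus_{K\subset J,|K|=|J|-2}W_K\to\bigoplus_{I\subset J,|I|=|J|-1}W_I$ send $x\in W_K$ to $(W_K^{I_1}(x),-W_K^{I_2}(x))\in W_{I_1}\oplus W_{I_2}$, where $I_1,I_2$ are the two sets with $K\subset I_i\subset J$, $|I_i|=|J|-1$. The $J$-central stabilization $\widetilde{W}_J$ is the cokernel of $\eta$; the maps $W_I^J$ induce a natural map $\widetilde{W}_J\to W_J$. $W$ is centrally stable starting at $E$ if $\widetilde{W}_J\to W_J$ is an isomorphism for every finite $J$ with $|J|>E$.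 *)

theory Defs
  imports "HOL-Algebra.Algebra"
begin

text \<open>An FI-module is given by abelian groups G I (for finite I \<subseteq> \<nat>), written
  multiplicatively as HOL-Algebra groups, and maps F I J f : G I \<rightarrow> G J for every
  injection f : I \<rightarrow> J (a function nat \<Rightarrow> nat that is injective on I with image in J;
  only its values on I matter).\<close>

definition FI_inj :: "nat set \<Rightarrow> nat set \<Rightarrow> (nat \<Rightarrow> nat) \<Rightarrow> bool" where
  "FI_inj I J f \<longleftrightarrow> finite I \<and> finite J \<and> inj_on f I \<and> f ` I \<subseteq> J"

definition FI_module ::
  "(nat set \<Rightarrow> ('a, 'c) monoid_scheme) \<Rightarrow> (nat set \<Rightarrow> nat set \<Rightarrow> (nat \<Rightarrow> nat) \<Rightarrow> 'a \<Rightarrow> 'a) \<Rightarrow> bool"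
  where
  "FI_module G F \<longleftrightarrow>
     (\<forall>I. finite I \<longrightarrow> comm_group (G I)) \<and>
     (\<forall>I J f. FI_inj I J f \<longrightarrow> F I J f \<in> hom (G I) (G J)) \<and>
     (\<forall>I J f g x. FI_inj I J f \<longrightarrow> (\<forall>i\<in>I. f i = g i) \<longrightarrow> x \<in> carrier (G I)
        \<longrightarrow> F I J f x = F I J g x) \<and>
     (\<forall>I x. finite I \<longrightarrow> x \<in> carrier (G I) \<longrightarrow> F I I id x = x) \<and>
     (\<forall>I J K f g x. FI_inj I J f \<longrightarrow> FI_inj J K g \<longrightarrow> x \<in> carrier (G I)
        \<longrightarrow> F I K (g \<circ> f) x = F J K g (F I J f x))"

definition incl :: "(nat set \<Rightarrow> nat set \<Rightarrow> (nat \<Rightarrow> nat) \<Rightarrow> 'a \<Rightarrow> 'a) \<Rightarrow> nat set \<Rightarrow> nat set \<Rightarrow> 'a \<Rightarrow> 'a"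
  where "incl F I J = F I J id"

definition FI_morphism ::
  "(nat set \<Rightarrow> ('a, 'c) monoid_scheme) \<Rightarrow> (nat set \<Rightarrow> nat set \<Rightarrow> (nat \<Rightarrow> nat) \<Rightarrow> 'a \<Rightarrow> 'a) \<Rightarrow>
   (nat set \<Rightarrow> ('b, 'd) monoid_scheme) \<Rightarrow> (nat set \<Rightarrow> nat set \<Rightarrow> (nat \<Rightarrow> nat) \<Rightarrow> 'b \<Rightarrow> 'b) \<Rightarrow>
   (nat set \<Rightarrow> 'a \<Rightarrow> 'b) \<Rightarrow> bool" where
  "FI_morphism V FV W FW \<Psi> \<longleftrightarrow>
     FI_module V FV \<and> FI_module W FW \<and>
     (\<forall>I. finite I \<longrightarrow> \<Psi> I \<in> hom (V I) (W I)) \<and>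
     (\<forall>I J f x. FI_inj I J f \<longrightarrow> x \<in> carrier (V I) \<longrightarrow> \<Psi> J (FV I J f x) = FW I J f (\<Psi> I x))"

definition sum_map ::
  "(nat set \<Rightarrow> ('a, 'c) monoid_scheme) \<Rightarrow> (nat set \<Rightarrow> nat set \<Rightarrow> (nat \<Rightarrow> nat) \<Rightarrow> 'a \<Rightarrow> 'a) \<Rightarrow>
   nat set set \<Rightarrow> nat set \<Rightarrow> (nat set \<Rightarrow> 'a) \<Rightarrow> 'a" where
  "sum_map G F S J x = finprod (G J) (\<lambda>I. incl F I J (x I)) S"

definition boundedly_generated ::
  "(nat set \<Rightarrow> ('a, 'c) monoid_scheme) \<Rightarrow> (nat set \<Rightarrow> nat set \<Rightarrow> (nat \<Rightarrow> nat) \<Rightarrow> 'a \<Rightarrow> 'a) \<Rightarrow> nat \<Rightarrow> bool"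
  where
  "boundedly_generated G F A \<longleftrightarrow>
     (\<forall>J. finite J \<longrightarrow>
        sum_map G F {I. I \<subseteq> J \<and> card I \<le> A} J
          ` carrier (product_group {I. I \<subseteq> J \<and> card I \<le> A} G) = carrier (G J))"

definition codim1 :: "nat set \<Rightarrow> nat set set" where
  "codim1 J = {I. I \<subseteq> J \<and> card I + 1 = card J}"
definition codim2 :: "nat set \<Rightarrow> nat set set" where
  "codim2 J = {K. K \<subseteq> J \<and> card K + 2 = card J}"

text \<open>The map eta. For K of size |J|-2, the two sets in between are
  I_1 = K \<union> {Min (J - K)} and I_2 = K \<union> {Max (J - K)}; x \<in> W_K goes to
  (W_K^{I_1} x, - W_K^{I_2} x).\<close>
definition eta ::
  "(nat set \<Rightarrow> ('a, 'c) monoid_scheme) \<Rightarrow> (nat set \<Rightarrow> nat set \<Rightarrow> (nat \<Rightarrow> nat) \<Rightarrow> 'a \<Rightarrow> 'a) \<Rightarrow>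
   nat set \<Rightarrow> (nat set \<Rightarrow> 'a) \<Rightarrow> (nat set \<Rightarrow> 'a)" where
  "eta G F J y = (\<lambda>I\<in>codim1 J.
      finprod (G I)
        (\<lambda>K. if I = K \<union> {Min (J - K)} then incl F K I (y K) else inv\<^bsub>G I\<^esub> (incl F K I (y K)))
        {K \<in> codim2 J. K \<subseteq> I})"

definition central_stab ::
  "(nat set \<Rightarrow> ('a, 'c) monoid_scheme) \<Rightarrow> (nat set \<Rightarrow> nat set \<Rightarrow> (nat \<Rightarrow> nat) \<Rightarrow> 'a \<Rightarrow> 'a) \<Rightarrow>
   nat set \<Rightarrow> (nat set \<Rightarrow> 'a) set monoid" where
  "central_stab G F J =
     product_group (codim1 J) G Mod (eta G F J ` carrier (product_group (codim2 J) G))"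

definition central_stab_map ::
  "(nat set \<Rightarrow> ('a, 'c) monoid_scheme) \<Rightarrow> (nat set \<Rightarrow> nat set \<Rightarrow> (nat \<Rightarrow> nat) \<Rightarrow> 'a \<Rightarrow> 'a) \<Rightarrow>
   nat set \<Rightarrow> (nat set \<Rightarrow> 'a) set \<Rightarrow> 'a" where
  "central_stab_map G F J C = sum_map G F (codim1 J) J (SOME x. x \<in> C)"

definition centrally_stable ::
  "(nat set \<Rightarrow> ('a, 'c) monoid_scheme) \<Rightarrow> (nat set \<Rightarrow> nat set \<Rightarrow> (nat \<Rightarrow> nat) \<Rightarrow> 'a \<Rightarrow> 'a) \<Rightarrow> nat \<Rightarrow> bool"
  where
  "centrally_stable G F E \<longleftrightarrow>
     (\<forall>J. finite J \<longrightarrow> card J > E \<longrightarrow>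
        central_stab_map G F J \<in> iso (central_stab G F J) (G J))"

end

theory Submission
  imports Defs
begin

lemma hom_finprod_gen:
  assumes G: "comm_group G" and H: "comm_group H" and h: "h \<in> hom G H"
    and fin: "finite A"
  shows "f \<in> A \<rightarrow> carrier G \<Longrightarrow> h (finprod G f A) = finprod H (\<lambda>i. h (f i)) A"
  using fin
proof (induction A rule: finite_induct)
  case empty
  have "group_hom G H h" using G H h
    by (simp add: comm_group.axioms(2) group_hom.intro group_hom_axioms.intro)
  then show ?case using G H by (simp add: comm_group.axioms(1) comm_monoid.finprod_empty group_hom.hom_one)
next
  case (insert a A)
  interpret G: comm_group G by fact
  interpret H: comm_group H by fact
  have ha: "h (f a) \<in> carrier H" "(\<lambda>i. h (f i)) \<in> A \<rightarrow> carrier H"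
    using insert h by (auto simp: hom_def)
  have "h (finprod G f (insert a A)) = h (f a \<otimes>\<^bsub>G\<^esub> finprod G f A)"
    using insert by simp
  also have "\<dots> = h (f a) \<otimes>\<^bsub>H\<^esub> h (finprod G f A)"
    using insert h by (auto simp: hom_def)
  also have "\<dots> = finprod H (\<lambda>i. h (f i)) (insert a A)"
    using insert ha by simp
  finally show ?case .
qed

lemma finprod_swap:
  assumes G: "comm_monoid G" and fA: "finite A" and fB: "finite B"
  shows "(\<And>i j. i \<in> A \<Longrightarrow> j \<in> B \<Longrightarrow> f i j \<in> carrier G) \<Longrightarrow>
    finprod G (\<lambda>i. finprod G (\<lambda>j. f i j) B) A = finprod G (\<lambda>j. finprod G (\<lambda>i. f i j) A) B"
  using fA
proof (induction A rule: finite_induct)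
  case empty
  interpret comm_monoid G by fact
  show ?case by (simp add: finprod_one_eqI)
next
  case (insert a A)
  interpret comm_monoid G by fact
  have c1: "(\<lambda>i. finprod G (f i) B) \<in> A \<rightarrow> carrier G" using insert by (auto intro!: finprod_closed)
  have "finprod G (\<lambda>i. finprod G (\<lambda>j. f i j) B) (insert a A)
      = finprod G (f a) B \<otimes>\<^bsub>G\<^esub> finprod G (\<lambda>i. finprod G (\<lambda>j. f i j) B) A"
    using insert c1 by (auto intro!: finprod_insert finprod_closed)
  also have "\<dots> = finprod G (f a) B \<otimes>\<^bsub>G\<^esub> finprod G (\<lambda>j. finprod G (\<lambda>i. f i j) A) B"
    using insert by simp
  also have "\<dots> = finprod G (\<lambda>j. f a j \<otimes>\<^bsub>G\<^esub> finprod G (\<lambda>i. f i j) A) B"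
    using insert by (subst finprod_multf) (auto intro!: finprod_closed)
  also have "\<dots> = finprod G (\<lambda>j. finprod G (\<lambda>i. f i j) (insert a A)) B"
    using insert by (intro finprod_cong') (auto intro!: finprod_closed)
  finally show ?case .
qed

lemma finprod_restrict_if:
  assumes G: "comm_monoid G" and fA: "finite A"
    and c: "\<And>x. x \<in> A \<Longrightarrow> P x \<Longrightarrow> f x \<in> carrier G"
  shows "finprod G (\<lambda>x. if P x then f x else \<one>\<^bsub>G\<^esub>) A = finprod G f {x\<in>A. P x}"
proof -
  interpret comm_monoid G by fact
  show ?thesis
    by (rule finprod_mono_neutral_cong_right) (use fA c in auto)
qed

lemma fm_group: "FI_module G F \<Longrightarrow> finite I \<Longrightarrow> comm_group (G I)"
  by (simp add: FI_module_def)

lemma FI_inj_id: "K \<subseteq> I \<Longrightarrow> finite I \<Longrightarrow> FI_inj K I id"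
  unfolding FI_inj_def using finite_subset[of K I] by auto

lemma fm_hom: "FI_module G F \<Longrightarrow> FI_inj I J f \<Longrightarrow> F I J f \<in> hom (G I) (G J)"
  by (simp add: FI_module_def)

lemma fm_comp: "FI_module G F \<Longrightarrow> FI_inj I J f \<Longrightarrow> FI_inj J K g \<Longrightarrow> x \<in> carrier (G I) \<Longrightarrow>
   F I K (g \<circ> f) x = F J K g (F I J f x)"
  by (simp add: FI_module_def)

lemma incl_hom: "FI_module G F \<Longrightarrow> K \<subseteq> I \<Longrightarrow> finite I \<Longrightarrow> incl F K I \<in> hom (G K) (G I)"
proof -
  assume a: "FI_module G F" "K \<subseteq> I" "finite I"
  show ?thesis unfolding incl_def using fm_hom[OF a(1) FI_inj_id[OF a(2,3)]] .
qed

lemma incl_closed: "FI_module G F \<Longrightarrow> K \<subseteq> I \<Longrightarrow> finite I \<Longrightarrow> x \<in> carrier (G K) \<Longrightarrow> incl F K I x \<in> carrier (G I)"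
  using incl_hom[of G F K I] by (auto simp: hom_def)

lemma incl_comp: "FI_module G F \<Longrightarrow> K \<subseteq> I \<Longrightarrow> I \<subseteq> J \<Longrightarrow> finite J \<Longrightarrow> x \<in> carrier (G K) \<Longrightarrow>
   incl F I J (incl F K I x) = incl F K J x"
proof -
  assume a: "FI_module G F" "K \<subseteq> I" "I \<subseteq> J" "finite J" "x \<in> carrier (G K)"
  have "F K J (id \<circ> id) x = F I J id (F K I id x)"
    using fm_comp[OF a(1) FI_inj_id[OF a(2) finite_subset[OF a(3,4)]] FI_inj_id[OF a(3,4)] a(5)] .
  thus ?thesis by (simp add: incl_def)
qed

lemma incl_one: "FI_module G F \<Longrightarrow> K \<subseteq> I \<Longrightarrow> finite I \<Longrightarrow> incl F K I \<one>\<^bsub>G K\<^esub> = \<one>\<^bsub>G I\<^esub>"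
proof -
  assume a: "FI_module G F" "K \<subseteq> I" "finite I"
  have "group_hom (G K) (G I) (incl F K I)"
    using a incl_hom[OF a] fm_group[OF a(1)] finite_subset[OF a(2,3)]
    by (simp add: comm_group.axioms(2) group_hom.intro group_hom_axioms.intro)
  thus ?thesis by (rule group_hom.hom_one)
qed

lemma incl_inv: "FI_module G F \<Longrightarrow> K \<subseteq> I \<Longrightarrow> finite I \<Longrightarrow> x \<in> carrier (G K) \<Longrightarrow>
  incl F K I (inv\<^bsub>G K\<^esub> x) = inv\<^bsub>G I\<^esub> (incl F K I x)"
proof -
  assume a: "FI_module G F" "K \<subseteq> I" "finite I" "x \<in> carrier (G K)"
  have "group_hom (G K) (G I) (incl F K I)"
    using a incl_hom[OF a(1-3)] fm_group[OF a(1)] finite_subset[OF a(2,3)]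
    by (simp add: comm_group.axioms(2) group_hom.intro group_hom_axioms.intro)
  thus ?thesis using a(4) by (rule group_hom.hom_inv)
qed

lemma codim1_fin: "finite J \<Longrightarrow> finite (codim1 J)"
  unfolding codim1_def by (rule finite_subset[of _ "Pow J"]) auto
lemma codim2_fin: "finite J \<Longrightarrow> finite (codim2 J)"
  unfolding codim2_def by (rule finite_subset[of _ "Pow J"]) auto

lemma codim1_sub: "I \<in> codim1 J \<Longrightarrow> I \<subseteq> J" by (simp add: codim1_def)
lemma codim2_sub: "K \<in> codim2 J \<Longrightarrow> K \<subseteq> J" by (simp add: codim2_def)

lemma eta_closed:
  assumes M: "FI_module G F" and J: "finite J" and k: "\<And>K. K \<in> codim2 J \<Longrightarrow> k K \<in> carrier (G K)"
    and I: "I \<in> codim1 J"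
  shows "eta G F J k I \<in> carrier (G I)"
proof -
  have fI: "finite I" using codim1_sub[OF I] J by (rule finite_subset)
  interpret comm_group "G I" using M fI fm_group by blast
  have "(\<lambda>K. if I = K \<union> {Min (J - K)} then incl F K I (k K) else inv\<^bsub>G I\<^esub> (incl F K I (k K)))
     \<in> {K \<in> codim2 J. K \<subseteq> I} \<rightarrow> carrier (G I)"
    using incl_closed[OF M _ fI] k by auto
  then show ?thesis unfolding eta_def using I by (simp del: finprod_closed add: finprod_closed)
qed

lemma eta_carrier:
  assumes M: "FI_module G F" and J: "finite J" and k: "k \<in> carrier (product_group (codim2 J) G)"
  shows "eta G F J k \<in> carrier (product_group (codim1 J) G)"
  using eta_closed[OF M J, of k] k by (auto simp: eta_def)

lemma codim_pair:
  assumes J: "finite J" and K: "K \<in> codim2 J"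
  obtains a b where "a \<noteq> b" "a \<notin> K" "b \<notin> K" "J - K = {a, b}"
    "{I \<in> codim1 J. K \<subseteq> I} = {insert a K, insert b K}"
proof -
  have KJ: "K \<subseteq> J" and cK: "card K + 2 = card J" using K by (auto simp: codim2_def)
  have fK: "finite K" using KJ J by (rule finite_subset)
  have "card (J - K) = 2" using card_Diff_subset[OF fK KJ] cK by simp
  then obtain a b where ab: "J - K = {a, b}" "a \<noteq> b" by (auto simp: card_2_iff)
  have nab: "a \<notin> K" "b \<notin> K" "a \<in> J" "b \<in> J" using ab by auto
  have "{I \<in> codim1 J. K \<subseteq> I} = {insert a K, insert b K}"
  proof (rule equalityI; rule subsetI)
    fix I assume "I \<in> {I \<in> codim1 J. K \<subseteq> I}"
    then have IJ: "I \<subseteq> J" and cI: "card I + 1 = card J" and KI: "K \<subseteq> I" by (auto simp: codim1_def)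
    have fI: "finite I" using IJ J by (rule finite_subset)
    have "card (I - K) = 1" using card_Diff_subset[OF fK KI] cI cK by simp
    then obtain c where c: "I - K = {c}" by (auto simp: card_Suc_eq)
    have "c \<in> {a, b}" using c IJ ab by blast
    moreover have "I = insert c K" using c KI by blast
    ultimately show "I \<in> {insert a K, insert b K}" by auto
  next
    fix I assume "I \<in> {insert a K, insert b K}"
    then obtain c where c: "c \<in> J" "c \<notin> K" "I = insert c K" using nab by auto
    have "card I = card K + 1" using c fK by simp
    then show "I \<in> {I \<in> codim1 J. K \<subseteq> I}" using c KJ cK by (auto simp: codim1_def)
  qed
  then show ?thesis using that nab ab by blast
qed

lemma sum_eta:
  assumes M: "FI_module G F" and J: "finite J" and k: "k \<in> carrier (product_group (codim2 J) G)"
  shows "sum_map G F (codim1 J) J (eta G F J k) = \<one>\<^bsub>G J\<^esub>"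
proof -
  interpret GJ: comm_group "G J" using M J fm_group by blast
  define C1 where "C1 = codim1 J"
  define C2 where "C2 = codim2 J"
  have f1: "finite C1" "finite C2" using J by (auto simp: C1_def C2_def codim1_fin codim2_fin)
  have kc: "\<And>K. K \<in> C2 \<Longrightarrow> k K \<in> carrier (G K)" using k by (auto simp: C2_def)
  define t where "t = (\<lambda>I K. if K \<subseteq> I then (if I = K \<union> {Min (J - K)} then incl F K J (k K)
      else inv\<^bsub>G J\<^esub> (incl F K J (k K))) else \<one>\<^bsub>G J\<^esub>)"
  have tc: "\<And>I K. K \<in> C2 \<Longrightarrow> t I K \<in> carrier (G J)"
    unfolding t_def using incl_closed[OF M _ J] kc codim2_sub by (auto simp: C2_def)
  have step1: "incl F I J (eta G F J k I) = finprod (G J) (t I) C2" if I: "I \<in> C1" for I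
  proof -
    have IJ: "I \<subseteq> J" using I codim1_sub by (auto simp: C1_def)
    have fI: "finite I" using IJ J by (rule finite_subset)
    interpret GI: comm_group "G I" using M fI fm_group by blast
    define s where "s = (\<lambda>K. if I = K \<union> {Min (J - K)} then incl F K I (k K) else inv\<^bsub>G I\<^esub> (incl F K I (k K)))"
    have sc: "s \<in> {K \<in> C2. K \<subseteq> I} \<rightarrow> carrier (G I)"
      unfolding s_def using incl_closed[OF M _ fI] kc by auto
    have "eta G F J k I = finprod (G I) s {K \<in> C2. K \<subseteq> I}"
      using I by (simp add: eta_def s_def C1_def C2_def)
    then have "incl F I J (eta G F J k I) = finprod (G J) (\<lambda>K. incl F I J (s K)) {K \<in> C2. K \<subseteq> I}"
      using hom_finprod_gen[OF GI.comm_group_axioms GJ.comm_group_axioms incl_hom[OF M IJ J], of "{K \<in> C2. K \<subseteq> I}" s] f1 sc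
      by simp
    also have "\<dots> = finprod (G J) (\<lambda>K. if K \<subseteq> I then (if I = K \<union> {Min (J - K)} then incl F K J (k K)
      else inv\<^bsub>G J\<^esub> (incl F K J (k K))) else \<one>\<^bsub>G J\<^esub>) {K \<in> C2. K \<subseteq> I}"
    proof (rule GJ.finprod_cong')
      show "(\<lambda>K. if K \<subseteq> I then (if I = K \<union> {Min (J - K)} then incl F K J (k K)
      else inv\<^bsub>G J\<^esub> (incl F K J (k K))) else \<one>\<^bsub>G J\<^esub>) \<in> {K \<in> C2. K \<subseteq> I} \<rightarrow> carrier (G J)"
        using tc unfolding t_def by auto
    next
      fix K assume K: "K \<in> {K \<in> C2. K \<subseteq> I}"
      then have kK: "k K \<in> carrier (G K)" and KI: "K \<subseteq> I" using kc by auto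
      show "incl F I J (s K) = (if K \<subseteq> I then (if I = K \<union> {Min (J - K)} then incl F K J (k K)
      else inv\<^bsub>G J\<^esub> (incl F K J (k K))) else \<one>\<^bsub>G J\<^esub>)"
        using incl_comp[OF M KI IJ J kK] incl_inv[OF M IJ J incl_closed[OF M KI fI kK]] KI
        by (simp only: s_def if_distrib[of "incl F I J"] if_True)
    qed simp
    also have "\<dots> = finprod (G J) (t I) C2"
      by (rule GJ.finprod_mono_neutral_cong_left) (use f1 tc in \<open>auto simp: t_def\<close>)
    finally show ?thesis .
  qed
  have step2: "finprod (G J) (\<lambda>I. t I K) C1 = \<one>\<^bsub>G J\<^esub>" if K: "K \<in> C2" for K
  proof -
    obtain a b where ab: "a \<noteq> b" "a \<notin> K" "b \<notin> K" "J - K = {a, b}"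
      "{I \<in> C1. K \<subseteq> I} = {insert a K, insert b K}"
      using codim_pair[OF J K[unfolded C2_def]] unfolding C1_def by blast
    have x: "incl F K J (k K) \<in> carrier (G J)"
      using incl_closed[OF M codim2_sub J kc] K by (auto simp: C2_def)
    have ne: "insert a K \<noteq> insert b K" using ab by auto
    have "finprod (G J) (\<lambda>I. t I K) C1 = finprod (G J) (\<lambda>I. t I K) {I \<in> C1. K \<subseteq> I}"
      by (rule GJ.finprod_mono_neutral_cong_right) (use f1 tc K in \<open>auto simp: t_def\<close>)
    also have "\<dots> = t (insert a K) K \<otimes>\<^bsub>G J\<^esub> t (insert b K) K"
      using ab(5) ne tc[OF K] by simp
    also have "\<dots> = \<one>\<^bsub>G J\<^esub>"
    proof -
      have "Min (J - K) \<in> {a, b}" using ab(4) by (simp add: min_def)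
      then consider "Min (J - K) = a" | "Min (J - K) = b" by blast
      then show ?thesis
      proof cases
        case 1
        then show ?thesis using ne x by (simp add: t_def subset_insertI)
      next
        case 2
        then show ?thesis using ne x by (simp add: t_def GJ.m_comm subset_insertI)
      qed
    qed
    finally show ?thesis .
  qed
  have "sum_map G F (codim1 J) J (eta G F J k) = finprod (G J) (\<lambda>I. finprod (G J) (t I) C2) C1"
    unfolding sum_map_def C1_def[symmetric]
    by (rule GJ.finprod_cong') (use step1 tc in \<open>auto simp: C1_def\<close>)
  also have "\<dots> = finprod (G J) (\<lambda>K. finprod (G J) (\<lambda>I. t I K) C1) C2"
    by (rule finprod_swap[OF GJ.comm_monoid_axioms f1]) (use tc in auto)
  also have "\<dots> = \<one>\<^bsub>G J\<^esub>"
    by (rule GJ.finprod_one_eqI) (use step2 in auto)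
  finally show ?thesis .
qed

lemma mor_V: "FI_morphism V FV W FW \<Psi> \<Longrightarrow> FI_module V FV" by (simp add: FI_morphism_def)
lemma mor_W: "FI_morphism V FV W FW \<Psi> \<Longrightarrow> FI_module W FW" by (simp add: FI_morphism_def)
lemma mor_hom: "FI_morphism V FV W FW \<Psi> \<Longrightarrow> finite I \<Longrightarrow> \<Psi> I \<in> hom (V I) (W I)"
  by (simp add: FI_morphism_def)
lemma mor_nat0: "FI_morphism V FV W FW \<Psi> \<Longrightarrow> FI_inj I J f \<Longrightarrow> x \<in> carrier (V I) \<Longrightarrow>
    \<Psi> J (FV I J f x) = FW I J f (\<Psi> I x)"
  by (simp add: FI_morphism_def)
lemma mor_nat: "FI_morphism V FV W FW \<Psi> \<Longrightarrow> I \<subseteq> J \<Longrightarrow> finite J \<Longrightarrow> x \<in> carrier (V I) \<Longrightarrow>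
    \<Psi> J (incl FV I J x) = incl FW I J (\<Psi> I x)"
proof -
  assume a: "FI_morphism V FV W FW \<Psi>" "I \<subseteq> J" "finite J" "x \<in> carrier (V I)"
  show ?thesis unfolding incl_def using mor_nat0[OF a(1) FI_inj_id[OF a(2,3)] a(4)] .
qed
lemma mor_closed: "FI_morphism V FV W FW \<Psi> \<Longrightarrow> finite I \<Longrightarrow> x \<in> carrier (V I) \<Longrightarrow> \<Psi> I x \<in> carrier (W I)"
  using mor_hom[of V FV W FW \<Psi> I] by (auto simp: hom_def)
lemma mor_inv: "FI_morphism V FV W FW \<Psi> \<Longrightarrow> finite I \<Longrightarrow> x \<in> carrier (V I) \<Longrightarrow>
   \<Psi> I (inv\<^bsub>V I\<^esub> x) = inv\<^bsub>W I\<^esub> (\<Psi> I x)"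
proof -
  assume a: "FI_morphism V FV W FW \<Psi>" "finite I" "x \<in> carrier (V I)"
  have "group_hom (V I) (W I) (\<Psi> I)"
    using mor_hom[OF a(1,2)] fm_group[OF mor_V[OF a(1)] a(2)] fm_group[OF mor_W[OF a(1)] a(2)]
    by (simp add: comm_group.axioms(2) group_hom.intro group_hom_axioms.intro)
  thus ?thesis using a(3) by (rule group_hom.hom_inv)
qed

lemma sum_map_closed:
  assumes M: "FI_module G F" and J: "finite J" and S: "\<And>I. I \<in> S \<Longrightarrow> I \<subseteq> J"
    and x: "\<And>I. I \<in> S \<Longrightarrow> x I \<in> carrier (G I)"
  shows "sum_map G F S J x \<in> carrier (G J)"
proof -
  interpret comm_group "G J" using M J fm_group by blast
  show ?thesis unfolding sum_map_def using incl_closed[OF M S J x] by (intro finprod_closed) auto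
qed

lemma psi_sum_map:
  assumes P: "FI_morphism V FV W FW \<Psi>" and J: "finite J" and S: "\<And>I. I \<in> S \<Longrightarrow> I \<subseteq> J"
    and x: "\<And>I. I \<in> S \<Longrightarrow> x I \<in> carrier (V I)"
  shows "\<Psi> J (sum_map V FV S J x) = sum_map W FW S J (\<lambda>I. \<Psi> I (x I))"
proof -
  have MV: "FI_module V FV" and MW: "FI_module W FW" using mor_V[OF P] mor_W[OF P] by auto
  interpret VJ: comm_group "V J" using MV J fm_group by blast
  interpret WJ: comm_group "W J" using MW J fm_group by blast
  have fS: "finite S" by (rule finite_subset[of S "Pow J"]) (use S J in blast, simp add: J)
  have "\<Psi> J (sum_map V FV S J x) = finprod (W J) (\<lambda>I. \<Psi> J (incl FV I J (x I))) S"
    unfolding sum_map_def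
    by (rule hom_finprod_gen[OF VJ.comm_group_axioms WJ.comm_group_axioms mor_hom[OF P J] fS])
       (use incl_closed[OF MV S J x] in auto)
  also have "\<dots> = sum_map W FW S J (\<lambda>I. \<Psi> I (x I))"
    unfolding sum_map_def
  proof (rule WJ.finprod_cong')
    fix I assume "I \<in> S"
    then show "\<Psi> J (incl FV I J (x I)) = incl FW I J (\<Psi> I (x I))"
      using mor_nat[OF P S J x] by blast
  next
    show "(\<lambda>I. incl FW I J (\<Psi> I (x I))) \<in> S \<rightarrow> carrier (W J)"
    proof
      fix I assume I: "I \<in> S"
      have "finite I" using S[OF I] J by (rule finite_subset)
      then show "incl FW I J (\<Psi> I (x I)) \<in> carrier (W J)"
        using incl_closed[OF MW S[OF I] J mor_closed[OF P _ x[OF I]]] by blast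
    qed
  qed simp
  finally show ?thesis .
qed

lemma psi_eta:
  assumes P: "FI_morphism V FV W FW \<Psi>" and J: "finite J"
    and m: "\<And>K. K \<in> codim2 J \<Longrightarrow> m K \<in> carrier (V K)" and I: "I \<in> codim1 J"
  shows "\<Psi> I (eta V FV J m I) = eta W FW J (\<lambda>K. \<Psi> K (m K)) I"
proof -
  have MV: "FI_module V FV" and MW: "FI_module W FW" using mor_V[OF P] mor_W[OF P] by auto
  have IJ: "I \<subseteq> J" using I codim1_sub by blast
  have fI: "finite I" using IJ J by (rule finite_subset)
  interpret VI: comm_group "V I" using MV fI fm_group by blast
  interpret WI: comm_group "W I" using MW fI fm_group by blast
  define A where "A = {K \<in> codim2 J. K \<subseteq> I}"
  have fA: "finite A" unfolding A_def using codim2_fin[OF J] by simp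
  have mA: "\<And>K. K \<in> A \<Longrightarrow> m K \<in> carrier (V K)" "\<And>K. K \<in> A \<Longrightarrow> K \<subseteq> I" using m by (auto simp: A_def)
  have fK: "\<And>K. K \<in> A \<Longrightarrow> finite K" using mA(2) fI by (rule finite_subset)
  define s where "s = (\<lambda>K. if I = K \<union> {Min (J - K)} then incl FV K I (m K) else inv\<^bsub>V I\<^esub> (incl FV K I (m K)))"
  have sc: "s \<in> A \<rightarrow> carrier (V I)" unfolding s_def using incl_closed[OF MV mA(2) fI mA(1)] by auto
  have "\<Psi> I (eta V FV J m I) = \<Psi> I (finprod (V I) s A)"
    using I by (simp add: eta_def s_def A_def)
  also have "\<dots> = finprod (W I) (\<lambda>K. \<Psi> I (s K)) A"
    by (rule hom_finprod_gen[OF VI.comm_group_axioms WI.comm_group_axioms mor_hom[OF P fI] fA sc])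
  also have "\<dots> = finprod (W I) (\<lambda>K. if I = K \<union> {Min (J - K)} then incl FW K I (\<Psi> K (m K))
        else inv\<^bsub>W I\<^esub> incl FW K I (\<Psi> K (m K))) A"
  proof (rule WI.finprod_cong')
    fix K assume K: "K \<in> A"
    have c: "incl FV K I (m K) \<in> carrier (V I)" using incl_closed[OF MV mA(2) fI mA(1)] K by blast
    have e1: "\<Psi> I (inv\<^bsub>V I\<^esub> incl FV K I (m K)) = inv\<^bsub>W I\<^esub> (\<Psi> I (incl FV K I (m K)))"
      by (rule mor_inv[OF P fI c])
    have e2: "\<Psi> I (incl FV K I (m K)) = incl FW K I (\<Psi> K (m K))"
      by (rule mor_nat[OF P mA(2)[OF K] fI mA(1)[OF K]])
    show "\<Psi> I (s K) = (if I = K \<union> {Min (J - K)} then incl FW K I (\<Psi> K (m K))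
        else inv\<^bsub>W I\<^esub> incl FW K I (\<Psi> K (m K)))"
      unfolding s_def if_distrib[of "\<Psi> I"] e1 e2 ..
  next
    have "incl FW K I (\<Psi> K (m K)) \<in> carrier (W I)" if K: "K \<in> A" for K
      using incl_closed[OF MW mA(2)[OF K] fI mor_closed[OF P fK[OF K] mA(1)[OF K]]] .
    then show "(\<lambda>K. if I = K \<union> {Min (J - K)} then incl FW K I (\<Psi> K (m K))
        else inv\<^bsub>W I\<^esub> incl FW K I (\<Psi> K (m K))) \<in> A \<rightarrow> carrier (W I)"
      by auto
  qed (rule refl)
  also have "\<dots> = eta W FW J (\<lambda>K. \<Psi> K (m K)) I"
    using I unfolding eta_def A_def by simp
  finally show ?thesis .
qed

lemma regroup:
  assumes M: "FI_module G F" and J: "finite J"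
    and S: "\<And>I. I \<in> S \<Longrightarrow> I \<subseteq> J" and Sc: "\<And>I. I \<in> S \<Longrightarrow> card I < card J"
    and g: "\<And>I. I \<in> S \<Longrightarrow> g I \<in> carrier (G I)"
  shows "\<exists>u. (\<forall>I\<in>codim1 J. u I \<in> carrier (G I)) \<and> sum_map G F S J g = sum_map G F (codim1 J) J u"
proof -
  interpret GJ: comm_group "G J" using M J fm_group by blast
  define C1 where "C1 = codim1 J"
  have f1: "finite C1" using J by (simp add: C1_def codim1_fin)
  have fS: "finite S" by (rule finite_subset[of S "Pow J"]) (use S J in blast, simp add: J)
  define c where "c = (\<lambda>I. J - {SOME a. a \<in> J - I})"
  have cprop: "c I \<in> C1 \<and> I \<subseteq> c I" if I: "I \<in> S" for I
  proof -
    have "I \<noteq> J" using Sc[OF I] by auto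
    then have "\<exists>a. a \<in> J - I" using S[OF I] by blast
    then have a: "(SOME a. a \<in> J - I) \<in> J - I" by (rule someI_ex)
    then have "card (c I) + 1 = card J" unfolding c_def using J
      by (simp add: card_Diff_singleton) (metis Suc_pred card_gt_0_iff emptyE)
    then show ?thesis using a S[OF I] unfolding C1_def codim1_def c_def by auto
  qed
  have fI': "finite I'" if "I' \<in> C1" for I' using codim1_sub[OF that[unfolded C1_def]] J by (rule finite_subset)
  define u where "u = (\<lambda>I'. finprod (G I') (\<lambda>I. if c I = I' then incl F I I' (g I) else \<one>\<^bsub>G I'\<^esub>) S)"
  have hc: "(\<lambda>I. if c I = I' then incl F I I' (g I) else \<one>\<^bsub>G I'\<^esub>) \<in> S \<rightarrow> carrier (G I')" if I': "I' \<in> C1" for I'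
  proof
    fix I assume I: "I \<in> S"
    interpret comm_group "G I'" using M fI'[OF I'] fm_group by blast
    show "(if c I = I' then incl F I I' (g I) else \<one>\<^bsub>G I'\<^esub>) \<in> carrier (G I')"
      using incl_closed[OF M _ fI'[OF I'] g[OF I]] cprop[OF I] by auto
  qed
  have uc: "\<forall>I\<in>C1. u I \<in> carrier (G I)"
  proof
    fix I' assume I': "I' \<in> C1"
    interpret comm_group "G I'" using M fI'[OF I'] fm_group by blast
    show "u I' \<in> carrier (G I')" unfolding u_def using hc[OF I'] by (rule finprod_closed)
  qed
  have xc: "incl F I J (g I) \<in> carrier (G J)" if "I \<in> S" for I
    using incl_closed[OF M S[OF that] J g[OF that]] .
  have "sum_map G F C1 J u = finprod (G J) (\<lambda>I'. finprod (G J)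
      (\<lambda>I. if c I = I' then incl F I J (g I) else \<one>\<^bsub>G J\<^esub>) S) C1"
    unfolding sum_map_def
  proof (rule GJ.finprod_cong')
    fix I' assume I': "I' \<in> C1"
    have I'J: "I' \<subseteq> J" using I' codim1_sub by (auto simp: C1_def)
    interpret GI: comm_group "G I'" using M fI'[OF I'] fm_group by blast
    have "incl F I' J (u I') = finprod (G J) (\<lambda>I. incl F I' J (if c I = I' then incl F I I' (g I) else \<one>\<^bsub>G I'\<^esub>)) S"
      unfolding u_def
      by (rule hom_finprod_gen[OF GI.comm_group_axioms GJ.comm_group_axioms incl_hom[OF M I'J J] fS hc[OF I']])
    also have "\<dots> = finprod (G J) (\<lambda>I. if c I = I' then incl F I J (g I) else \<one>\<^bsub>G J\<^esub>) S"
    proof (rule GJ.finprod_cong')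
      fix I assume I: "I \<in> S"
      show "incl F I' J (if c I = I' then incl F I I' (g I) else \<one>\<^bsub>G I'\<^esub>) =
        (if c I = I' then incl F I J (g I) else \<one>\<^bsub>G J\<^esub>)"
      proof (cases "c I = I'")
        case True
        then show ?thesis using incl_comp[OF M _ I'J J g[OF I]] cprop[OF I] by simp
      next
        case False
        then show ?thesis using incl_one[OF M I'J J] by simp
      qed
    next
      show "(\<lambda>I. if c I = I' then incl F I J (g I) else \<one>\<^bsub>G J\<^esub>) \<in> S \<rightarrow> carrier (G J)"
        using xc by auto
    qed (rule refl)
    finally show "incl F I' J (u I') = finprod (G J) (\<lambda>I. if c I = I' then incl F I J (g I) else \<one>\<^bsub>G J\<^esub>) S" .
  next
    show "(\<lambda>I'. finprod (G J) (\<lambda>I. if c I = I' then incl F I J (g I) else \<one>\<^bsub>G J\<^esub>) S) \<in> C1 \<rightarrow> carrier (G J)"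
      using xc by (auto intro!: GJ.finprod_closed)
  qed (rule refl)
  also have "\<dots> = finprod (G J) (\<lambda>I. finprod (G J)
      (\<lambda>I'. if c I = I' then incl F I J (g I) else \<one>\<^bsub>G J\<^esub>) C1) S"
    by (rule finprod_swap[OF GJ.comm_monoid_axioms f1 fS]) (use xc in auto)
  also have "\<dots> = sum_map G F S J g"
    unfolding sum_map_def
  proof (rule GJ.finprod_cong')
    fix I assume I: "I \<in> S"
    show "finprod (G J) (\<lambda>I'. if c I = I' then incl F I J (g I) else \<one>\<^bsub>G J\<^esub>) C1 = incl F I J (g I)"
      using GJ.finprod_singleton[of "c I" C1 "\<lambda>_. incl F I J (g I)"] cprop[OF I] f1 xc[OF I] by auto
  next
    show "(\<lambda>I. incl F I J (g I)) \<in> S \<rightarrow> carrier (G J)" using xc by auto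
  qed (rule refl)
  finally show ?thesis using uc unfolding C1_def by metis
qed

lemma eta_one:
  assumes M: "FI_module G F" and J: "finite J"
  shows "eta G F J (\<one>\<^bsub>product_group (codim2 J) G\<^esub>) = \<one>\<^bsub>product_group (codim1 J) G\<^esub>"
proof -
  have "eta G F J (\<one>\<^bsub>product_group (codim2 J) G\<^esub>) I = \<one>\<^bsub>G I\<^esub>" if I: "I \<in> codim1 J" for I
  proof -
    have IJ: "I \<subseteq> J" using codim1_sub[OF I] .
    have fI: "finite I" using IJ J by (rule finite_subset)
    interpret GI: comm_group "G I" using M fI fm_group by blast
    have "\<And>K. K \<in> {K \<in> codim2 J. K \<subseteq> I} \<Longrightarrow> incl F K I (\<one>\<^bsub>product_group (codim2 J) G\<^esub> K) = \<one>\<^bsub>G I\<^esub>"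
      using incl_one[OF M _ fI] by simp
    note Kf = this
    show ?thesis unfolding eta_def using I
      by (simp only: restrict_apply' if_True) (rule GI.finprod_one_eqI, simp only: Kf GI.inv_one if_cancel)
  qed
  then show ?thesis by (auto simp: eta_def)
qed

lemma sum_map_mult:
  assumes M: "FI_module G F" and J: "finite J" and S: "\<And>I. I \<in> S \<Longrightarrow> I \<subseteq> J"
    and a: "a \<in> carrier (product_group S G)" and b: "b \<in> carrier (product_group S G)"
  shows "sum_map G F S J (a \<otimes>\<^bsub>product_group S G\<^esub> b) = sum_map G F S J a \<otimes>\<^bsub>G J\<^esub> sum_map G F S J b"
proof -
  interpret GJ: comm_group "G J" using M J fm_group by blast
  have ac: "\<And>I. I \<in> S \<Longrightarrow> a I \<in> carrier (G I)" and bc: "\<And>I. I \<in> S \<Longrightarrow> b I \<in> carrier (G I)"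
    using a b by auto
  have ia: "(\<lambda>I. incl F I J (a I)) \<in> S \<rightarrow> carrier (G J)" using incl_closed[OF M S J ac] by auto
  have ib: "(\<lambda>I. incl F I J (b I)) \<in> S \<rightarrow> carrier (G J)" using incl_closed[OF M S J bc] by auto
  have "sum_map G F S J (a \<otimes>\<^bsub>product_group S G\<^esub> b) =
      finprod (G J) (\<lambda>I. incl F I J (a I) \<otimes>\<^bsub>G J\<^esub> incl F I J (b I)) S"
    unfolding sum_map_def mult_product_group
  proof (rule GJ.finprod_cong')
    fix I assume I: "I \<in> S"
    show "incl F I J ((\<lambda>i\<in>S. a i \<otimes>\<^bsub>G i\<^esub> b i) I) = incl F I J (a I) \<otimes>\<^bsub>G J\<^esub> incl F I J (b I)"
      using I incl_hom[OF M S[OF I] J] ac[OF I] bc[OF I] by (simp add: hom_mult)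
  next
    show "(\<lambda>I. incl F I J (a I) \<otimes>\<^bsub>G J\<^esub> incl F I J (b I)) \<in> S \<rightarrow> carrier (G J)"
      using ia ib by auto
  qed (rule refl)
  also have "\<dots> = sum_map G F S J a \<otimes>\<^bsub>G J\<^esub> sum_map G F S J b"
    unfolding sum_map_def by (rule GJ.finprod_multf[OF ia ib])
  finally show ?thesis .
qed

lemma sum_map_one:
  assumes M: "FI_module G F" and J: "finite J" and S: "\<And>I. I \<in> S \<Longrightarrow> I \<subseteq> J"
  shows "sum_map G F S J (\<one>\<^bsub>product_group S G\<^esub>) = \<one>\<^bsub>G J\<^esub>"
proof -
  interpret GJ: comm_group "G J" using M J fm_group by blast
  show ?thesis unfolding sum_map_def
    by (rule GJ.finprod_one_eqI) (use incl_one[OF M S J] in simp)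
qed

lemma cs_inj:
  assumes M: "FI_module G F" and J: "finite J"
    and cs: "central_stab_map G F J \<in> iso (central_stab G F J) (G J)"
    and y: "y \<in> carrier (product_group (codim1 J) G)"
    and y1: "sum_map G F (codim1 J) J y = \<one>\<^bsub>G J\<^esub>"
  shows "\<exists>k \<in> carrier (product_group (codim2 J) G). y = eta G F J k"
proof -
  define P1 where "P1 = product_group (codim1 J) G"
  define P2 where "P2 = product_group (codim2 J) G"
  define H where "H = eta G F J ` carrier P2"
  have S1: "\<And>I. I \<in> codim1 J \<Longrightarrow> I \<subseteq> J" by (rule codim1_sub)
  have fin1: "\<And>I. I \<in> codim1 J \<Longrightarrow> finite I" using S1 J finite_subset by blast
  have gP1: "group P1" unfolding P1_def
    by (rule product_group) (use fm_group[OF M] fin1 comm_group.axioms(2) in blast)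
  interpret P1: group P1 by (rule gP1)
  interpret GJ: comm_group "G J" using M J fm_group by blast
  have HC: "H \<subseteq> carrier P1" unfolding H_def P1_def P2_def using eta_carrier[OF M J] by blast
  have oneP2: "\<one>\<^bsub>P2\<^esub> \<in> carrier P2" unfolding P2_def
  proof (simp, rule)
    fix K assume K: "K \<in> codim2 J"
    have "finite K" using codim2_sub[OF K] J by (rule finite_subset)
    then interpret comm_group "G K" using fm_group[OF M] by blast
    show "\<one>\<^bsub>G K\<^esub> \<in> carrier (G K)" by simp
  qed
  have oneH: "\<one>\<^bsub>P1\<^esub> \<in> H" unfolding H_def using eta_one[OF M J] oneP2 unfolding P1_def P2_def
    by (metis image_eqI)
  have key: "central_stab_map G F J (H #>\<^bsub>P1\<^esub> a) = \<one>\<^bsub>G J\<^esub>"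
    if a: "a \<in> carrier P1" "sum_map G F (codim1 J) J a = \<one>\<^bsub>G J\<^esub>" for a
  proof -
    have "\<one>\<^bsub>P1\<^esub> \<otimes>\<^bsub>P1\<^esub> a \<in> H #>\<^bsub>P1\<^esub> a" using oneH unfolding r_coset_def by blast
    then have "(SOME z. z \<in> H #>\<^bsub>P1\<^esub> a) \<in> H #>\<^bsub>P1\<^esub> a" by (rule someI[where P="\<lambda>z. z \<in> H #>\<^bsub>P1\<^esub> a"])
    then obtain k where k: "k \<in> carrier P2" "(SOME z. z \<in> H #>\<^bsub>P1\<^esub> a) = eta G F J k \<otimes>\<^bsub>P1\<^esub> a"
      unfolding r_coset_def H_def by blast
    have "sum_map G F (codim1 J) J (eta G F J k \<otimes>\<^bsub>P1\<^esub> a) =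
        sum_map G F (codim1 J) J (eta G F J k) \<otimes>\<^bsub>G J\<^esub> sum_map G F (codim1 J) J a"
      unfolding P1_def
      by (rule sum_map_mult[OF M J S1 eta_carrier[OF M J]]) (use k a in \<open>auto simp: P1_def P2_def\<close>)
    also have "\<dots> = \<one>\<^bsub>G J\<^esub>" using sum_eta[OF M J, of k] k a unfolding P2_def by simp
    finally show ?thesis unfolding central_stab_map_def k(2) .
  qed
  have yP: "y \<in> carrier P1" using y by (simp add: P1_def)
  have c1: "H #>\<^bsub>P1\<^esub> y \<in> carrier (central_stab G F J)"
    unfolding central_stab_def P1_def[symmetric] P2_def[symmetric] H_def[symmetric] FactGroup_def RCOSETS_def
    using yP by auto
  have c2: "H #>\<^bsub>P1\<^esub> \<one>\<^bsub>P1\<^esub> \<in> carrier (central_stab G F J)"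
    unfolding central_stab_def P1_def[symmetric] P2_def[symmetric] H_def[symmetric] FactGroup_def RCOSETS_def
    using P1.one_closed by auto
  have e1: "central_stab_map G F J (H #>\<^bsub>P1\<^esub> y) = \<one>\<^bsub>G J\<^esub>" using key yP y1 by blast
  have e2: "central_stab_map G F J (H #>\<^bsub>P1\<^esub> \<one>\<^bsub>P1\<^esub>) = \<one>\<^bsub>G J\<^esub>"
  proof (rule key[OF P1.one_closed])
    show "sum_map G F (codim1 J) J \<one>\<^bsub>P1\<^esub> = \<one>\<^bsub>G J\<^esub>" unfolding P1_def
      by (rule sum_map_one[OF M J]) (rule S1)
  qed
  have inj: "inj_on (central_stab_map G F J) (carrier (central_stab G F J))"
    using cs by (simp add: iso_def bij_betw_def)
  have eq: "H #>\<^bsub>P1\<^esub> y = H #>\<^bsub>P1\<^esub> \<one>\<^bsub>P1\<^esub>" using inj c1 c2 e1 e2 by (metis inj_onD)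
  have "y \<in> H #>\<^bsub>P1\<^esub> y" using oneH yP unfolding r_coset_def by force
  then have "y \<in> H #>\<^bsub>P1\<^esub> \<one>\<^bsub>P1\<^esub>" using eq by simp
  then obtain h where "h \<in> H" "y = h \<otimes>\<^bsub>P1\<^esub> \<one>\<^bsub>P1\<^esub>" unfolding r_coset_def by blast
  then have "y \<in> H" using HC by auto
  then show ?thesis unfolding H_def P2_def by blast
qed

lemma eta_cong:
  assumes M: "FI_module G F" and J: "finite J" and I: "I \<in> codim1 J"
    and k': "\<And>K. K \<in> codim2 J \<Longrightarrow> k' K \<in> carrier (G K)"
    and kk: "\<And>K. K \<in> codim2 J \<Longrightarrow> k K = k' K"
  shows "eta G F J k I = eta G F J k' I"
proof -
  have fI: "finite I" using codim1_sub[OF I] J by (rule finite_subset)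
  interpret GI: comm_group "G I" using M fI fm_group by blast
  show ?thesis unfolding eta_def using I
  proof (simp only: restrict_apply' if_True, intro GI.finprod_cong')
    show "(\<lambda>K. if I = K \<union> {Min (J - K)} then incl F K I (k' K) else inv\<^bsub>G I\<^esub> incl F K I (k' K))
      \<in> {K \<in> codim2 J. K \<subseteq> I} \<rightarrow> carrier (G I)"
      using incl_closed[OF M _ fI] k' by auto
  qed (use kk in auto)
qed

lemma iso_surj: "h \<in> iso A B \<Longrightarrow> b \<in> carrier B \<Longrightarrow> \<exists>a\<in>carrier A. h a = b"
  unfolding iso_def bij_betw_def by (metis (mono_tags, lifting) imageE mem_Collect_eq)

lemma iso_inj: "h \<in> iso A B \<Longrightarrow> a \<in> carrier A \<Longrightarrow> a' \<in> carrier A \<Longrightarrow> h a = h a' \<Longrightarrow> a = a'"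
  by (auto simp: iso_def bij_betw_def inj_on_def)

theorem lemma2p23:
  fixes V :: "nat set \<Rightarrow> ('a, 'c) monoid_scheme"
    and FV :: "nat set \<Rightarrow> nat set \<Rightarrow> (nat \<Rightarrow> nat) \<Rightarrow> 'a \<Rightarrow> 'a"
    and W :: "nat set \<Rightarrow> ('b, 'd) monoid_scheme"
    and FW :: "nat set \<Rightarrow> nat set \<Rightarrow> (nat \<Rightarrow> nat) \<Rightarrow> 'b \<Rightarrow> 'b"
    and \<Psi> :: "nat set \<Rightarrow> 'a \<Rightarrow> 'b"
    and E :: nat
  assumes "FI_morphism V FV W FW \<Psi>"
    and "centrally_stable W FW E"
    and "boundedly_generated V FV E"
    and "\<And>J. finite J \<Longrightarrow> card J \<le> E \<Longrightarrow> \<Psi> J \<in> iso (V J) (W J)"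
  shows "\<forall>J. finite J \<longrightarrow> \<Psi> J \<in> iso (V J) (W J)"
proof -
  note P = assms(1)
  have MV: "FI_module V FV" and MW: "FI_module W FW" using mor_V[OF P] mor_W[OF P] by auto
  have main: "\<forall>J::nat set. finite J \<longrightarrow> card J = n \<longrightarrow> \<Psi> J \<in> iso (V J) (W J)" for n
  proof (induction n rule: less_induct)
    case (less n)
    show ?case
    proof (intro allI impI)
      fix J :: "nat set" assume J: "finite J" and cJ: "card J = n"
      show "\<Psi> J \<in> iso (V J) (W J)"
      proof (cases "n \<le> E")
        case True
        then show ?thesis using assms(4) J cJ by simp
      next
        case False
        have IH: "\<Psi> I \<in> iso (V I) (W I)" if "finite I" "card I < n" for I
          using less that by blast
        interpret VJ: comm_group "V J" using MV J fm_group by blast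
        interpret WJ: comm_group "W J" using MW J fm_group by blast
        have hJ: "\<Psi> J \<in> hom (V J) (W J)" by (rule mor_hom[OF P J])
        have gh: "group_hom (V J) (W J) (\<Psi> J)"
          using hJ by (simp add: group_hom.intro group_hom_axioms.intro VJ.is_group WJ.is_group)
        have S1: "\<And>I. I \<in> codim1 J \<Longrightarrow> I \<subseteq> J" by (rule codim1_sub)
        have fin1: "finite I" if "I \<in> codim1 J" for I using S1[OF that] J by (rule finite_subset)
        have card1: "card I < n" if "I \<in> codim1 J" for I using that cJ by (auto simp: codim1_def)
        have fin2: "finite K" if "K \<in> codim2 J" for K using codim2_sub[OF that] J by (rule finite_subset)
        have card2: "card K < n" if "K \<in> codim2 J" for K using that cJ by (auto simp: codim2_def)
        have cs: "central_stab_map W FW J \<in> iso (central_stab W FW J) (W J)"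
          using assms(2) J False cJ unfolding centrally_stable_def by auto
        have surj: "\<Psi> J ` carrier (V J) = carrier (W J)"
        proof
          show "\<Psi> J ` carrier (V J) \<subseteq> carrier (W J)" using hJ by (auto simp: hom_def)
        next
          show "carrier (W J) \<subseteq> \<Psi> J ` carrier (V J)"
          proof
            fix w assume w: "w \<in> carrier (W J)"
            define P1 where "P1 = product_group (codim1 J) W"
            define P2 where "P2 = product_group (codim2 J) W"
            define H where "H = eta W FW J ` carrier P2"
            have gP1: "group P1" unfolding P1_def
              by (rule product_group) (use fm_group[OF MW] fin1 comm_group.axioms(2) in blast)
            interpret P1: group P1 by (rule gP1)
            obtain C where C: "C \<in> carrier (central_stab W FW J)" "central_stab_map W FW J C = w"
              using iso_surj[OF cs w] by blast
            obtain a where a: "a \<in> carrier P1" "C = H #>\<^bsub>P1\<^esub> a"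
              using C(1) unfolding central_stab_def P1_def[symmetric] P2_def[symmetric] H_def[symmetric]
                FactGroup_def RCOSETS_def by auto
            have oneP2: "\<one>\<^bsub>P2\<^esub> \<in> carrier P2" unfolding P2_def
            proof (simp, rule)
              fix K assume K: "K \<in> codim2 J"
              interpret comm_group "W K" using fm_group[OF MW fin2[OF K]] .
              show "\<one>\<^bsub>W K\<^esub> \<in> carrier (W K)" by simp
            qed
            have oneH: "\<one>\<^bsub>P1\<^esub> \<in> H" unfolding H_def using eta_one[OF MW J] oneP2 unfolding P1_def P2_def
              by (metis image_eqI)
            have HC: "H \<subseteq> carrier P1" unfolding H_def P1_def P2_def using eta_carrier[OF MW J] by blast
            have "\<one>\<^bsub>P1\<^esub> \<otimes>\<^bsub>P1\<^esub> a \<in> C" using oneH a unfolding r_coset_def by blast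
            then have yC: "(SOME z. z \<in> C) \<in> C" by (rule someI[where P="\<lambda>z. z \<in> C"])
            define y where "y = (SOME z. z \<in> C)"
            have yc: "y \<in> carrier P1" using yC a HC unfolding y_def r_coset_def by auto
            have wy: "w = sum_map W FW (codim1 J) J y" using C(2) unfolding central_stab_map_def y_def by simp
            have yI: "y I \<in> carrier (W I)" if "I \<in> codim1 J" for I using yc that by (auto simp: P1_def)
            have ex: "\<exists>v. v \<in> carrier (V I) \<and> \<Psi> I v = y I" if I: "I \<in> codim1 J" for I
              using iso_surj[OF IH[OF fin1[OF I] card1[OF I]] yI[OF I]] by blast
            define v where "v = (\<lambda>I. SOME v. v \<in> carrier (V I) \<and> \<Psi> I v = y I)"
            have v: "v I \<in> carrier (V I)" "\<Psi> I (v I) = y I" if I: "I \<in> codim1 J" for I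
              using someI_ex[OF ex[OF I]] unfolding v_def by auto
            have "\<Psi> J (sum_map V FV (codim1 J) J v) = sum_map W FW (codim1 J) J (\<lambda>I. \<Psi> I (v I))"
              by (rule psi_sum_map[OF P J]) (simp_all add: S1 v(1))
            also have "\<dots> = w" unfolding wy sum_map_def
              by (rule WJ.finprod_cong') (use v(2) incl_closed[OF MW S1 J yI] in auto)
            finally show "w \<in> \<Psi> J ` carrier (V J)"
              using sum_map_closed[OF MV J S1 v(1)] by (metis image_eqI)
          qed
        qed
        have ker: "kernel (V J) (W J) (\<Psi> J) \<subseteq> {\<one>\<^bsub>V J\<^esub>}"
        proof
          fix x assume "x \<in> kernel (V J) (W J) (\<Psi> J)"
          then have x: "x \<in> carrier (V J)" and x1: "\<Psi> J x = \<one>\<^bsub>W J\<^esub>" by (auto simp: kernel_def)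
          define S where "S = {I. I \<subseteq> J \<and> card I \<le> E}"
          have bg: "sum_map V FV S J ` carrier (product_group S V) = carrier (V J)"
            using assms(3) J unfolding boundedly_generated_def S_def by simp
          obtain g where g: "g \<in> carrier (product_group S V)" "x = sum_map V FV S J g"
            using x unfolding bg[symmetric] by (rule imageE) simp
          have SJ: "\<And>I. I \<in> S \<Longrightarrow> I \<subseteq> J" by (simp add: S_def)
          have Sc: "\<And>I. I \<in> S \<Longrightarrow> card I < card J" using False cJ by (auto simp: S_def)
          have gI: "\<And>I. I \<in> S \<Longrightarrow> g I \<in> carrier (V I)" using g(1) by auto
          obtain u where u: "\<forall>I\<in>codim1 J. u I \<in> carrier (V I)" and xu: "x = sum_map V FV (codim1 J) J u"
            using regroup[OF MV J SJ Sc gI] g(2) by auto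
          define y where "y = (\<lambda>I\<in>codim1 J. \<Psi> I (u I))"
          have yc: "y \<in> carrier (product_group (codim1 J) W)"
            using mor_closed[OF P fin1] u by (auto simp: y_def)
          have "sum_map W FW (codim1 J) J y = sum_map W FW (codim1 J) J (\<lambda>I. \<Psi> I (u I))"
            unfolding sum_map_def y_def
            by (rule WJ.finprod_cong') (use incl_closed[OF MW S1 J mor_closed[OF P fin1]] u in auto)
          also have "\<dots> = \<Psi> J x" unfolding xu
            by (rule psi_sum_map[OF P J S1, symmetric]) (use u in auto)
          finally have y1: "sum_map W FW (codim1 J) J y = \<one>\<^bsub>W J\<^esub>" using x1 by simp
          obtain k where k: "k \<in> carrier (product_group (codim2 J) W)" "y = eta W FW J k"
            using cs_inj[OF MW J cs yc y1] by blast
          have kK: "k K \<in> carrier (W K)" if "K \<in> codim2 J" for K using k(1) that by auto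
          have ex: "\<exists>m. m \<in> carrier (V K) \<and> \<Psi> K m = k K" if K: "K \<in> codim2 J" for K
            using iso_surj[OF IH[OF fin2[OF K] card2[OF K]] kK[OF K]] by blast
          define m where "m = (\<lambda>K\<in>codim2 J. SOME m. m \<in> carrier (V K) \<and> \<Psi> K m = k K)"
          have m: "m K \<in> carrier (V K)" "\<Psi> K (m K) = k K" if K: "K \<in> codim2 J" for K
            using someI_ex[OF ex[OF K]] K unfolding m_def by auto
          have mc: "m \<in> carrier (product_group (codim2 J) V)" using m(1) by (auto simp: m_def)
          have ueq: "u I = eta V FV J m I" if I: "I \<in> codim1 J" for I
          proof (rule iso_inj[OF IH[OF fin1[OF I] card1[OF I]]])
            show "u I \<in> carrier (V I)" using u I by blast
            show "eta V FV J m I \<in> carrier (V I)" by (rule eta_closed[OF MV J m(1) I])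
            have "\<Psi> I (u I) = y I" using I by (simp add: y_def)
            also have "\<dots> = eta W FW J k I" using k(2) by simp
            also have "\<dots> = eta W FW J (\<lambda>K. \<Psi> K (m K)) I"
              by (rule eta_cong[OF MW J I]) (use m kK in auto)
            also have "\<dots> = \<Psi> I (eta V FV J m I)" by (rule psi_eta[OF P J m(1) I, symmetric])
            finally show "\<Psi> I (u I) = \<Psi> I (eta V FV J m I)" .
          qed
          have "x = sum_map V FV (codim1 J) J (eta V FV J m)" unfolding xu sum_map_def
            by (rule VJ.finprod_cong') (use ueq incl_closed[OF MV S1 J eta_closed[OF MV J m(1)]] in auto)
          also have "\<dots> = \<one>\<^bsub>V J\<^esub>" by (rule sum_eta[OF MV J mc])
          finally show "x \<in> {\<one>\<^bsub>V J\<^esub>}" by simp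
        qed
        have "kernel (V J) (W J) (\<Psi> J) = {\<one>\<^bsub>V J\<^esub>}"
          using ker group_hom.hom_one[OF gh] unfolding kernel_def by auto
        then have inj: "inj_on (\<Psi> J) (carrier (V J))" using group_hom.inj_iff_trivial_ker[OF gh] by simp
        show ?thesis using hJ inj surj by (simp add: iso_def bij_betw_def)
      qed
    qed
  qed
  show ?thesis using main by blast
qed

end
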